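(* Let $\mathfrak g$ be a unimodular Lie algebra with a Hermitian structure $(J,g)$ and let $e$ be a unitary frame. If $D^j_{ik}=D^j_{ki}$ for all $i,j,k$, then the Chern scalar curvature satisfies $s=-\sum_{r,s,t}|D^t_{rs}|^2\le0$, with $s<0$ unless $D=0$. If $D^j_{ik}=-D^j_{ki}$ for all $i,j,k$, then $s=\sum_{r,s,t}|D^t_{rs}|^2\ge0$, with $s>0$ unless $D=0$.
   Context: Hermitian structure on a real Lie algebra $\mathfrak g$ of dimension $2n$: integrable almost complex structure $J$ and $J$-invariant inner product $g$. Unimodular: $\operatorname{tr}\mathrm{ad}_x=0$ for all $x$. $\mathfrak g^{1,0}=\{x-\sqrt{-1}Jx\}$, $g$ extended bilinearly, unitary frame $e_1,\dots,e_n$. $D^j_{ik}=g([\bar e_j,e_k],e_i)$. $R$ is the curvature of the Chern connection (unique connection preserving $J,g$ with torsion of vanishing $(1,1)$-part), $R_{i\bar jk\bar\ell}=g(R(e_i,\bar e_j)e_k,\bar e_\ell)$, and the Chern scalar curvature is $s=\sum_{i,r}R_{i\bar ir\bar r}$. *)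

theory Defs
  imports "HOL-Analysis.Analysis"
begin

definition lie_algebra :: "('a::real_vector \<Rightarrow> 'a \<Rightarrow> 'a) \<Rightarrow> bool" where
  "lie_algebra br \<longleftrightarrow> bilinear br \<and> (\<forall>x y. br x y = - br y x)
     \<and> (\<forall>x y z. br x (br y z) + br y (br z x) + br z (br x y) = 0)"

definition unimodular :: "('a::euclidean_space \<Rightarrow> 'a \<Rightarrow> 'a) \<Rightarrow> bool" where
  "unimodular br \<longleftrightarrow> (\<forall>x. (\<Sum>b\<in>Basis. inner (br x b) b) = 0)"

definition integrable_acs :: "('a::real_vector \<Rightarrow> 'a \<Rightarrow> 'a) \<Rightarrow> ('a \<Rightarrow> 'a) \<Rightarrow> bool" where
  "integrable_acs br J \<longleftrightarrow> linear J \<and> (\<forall>x. J (J x) = - x)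
     \<and> (\<forall>x y. br (J x) (J y) - J (br (J x) y) - J (br x (J y)) - br x y = 0)"

definition herm_metric :: "('a::real_vector \<Rightarrow> 'a \<Rightarrow> real) \<Rightarrow> ('a \<Rightarrow> 'a) \<Rightarrow> bool" where
  "herm_metric g J \<longleftrightarrow> bilinear g \<and> (\<forall>x y. g x y = g y x) \<and> (\<forall>x. x \<noteq> 0 \<longrightarrow> g x x > 0)
     \<and> (\<forall>x y. g (J x) (J y) = g x y)"

definition hermitian_lie_algebra ::
  "('a::euclidean_space \<Rightarrow> 'a \<Rightarrow> 'a) \<Rightarrow> ('a \<Rightarrow> 'a) \<Rightarrow> ('a \<Rightarrow> 'a \<Rightarrow> real) \<Rightarrow> bool" where
  "hermitian_lie_algebra br J g \<longleftrightarrow> lie_algebra br \<and> integrable_acs br J \<and> herm_metric g J"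

text \<open>An element (x, y) of 'a \<times> 'a represents x + sqrt(-1) y in the complexification.\<close>

definition cconj :: "'a::real_vector \<times> 'a \<Rightarrow> 'a \<times> 'a" where
  "cconj X = (fst X, - snd X)"

definition cbil :: "('a::real_vector \<Rightarrow> 'a \<Rightarrow> 'a) \<Rightarrow> 'a \<times> 'a \<Rightarrow> 'a \<times> 'a \<Rightarrow> 'a \<times> 'a" where
  "cbil B X Y = (B (fst X) (fst Y) - B (snd X) (snd Y), B (fst X) (snd Y) + B (snd X) (fst Y))"

text \<open>Complex-bilinear extension of the real bilinear form g.\<close>

definition cform :: "('a::real_vector \<Rightarrow> 'a \<Rightarrow> real) \<Rightarrow> 'a \<times> 'a \<Rightarrow> 'a \<times> 'a \<Rightarrow> complex" where
  "cform g X Y = Complex (g (fst X) (fst Y) - g (snd X) (snd Y)) (g (fst X) (snd Y) + g (snd X) (fst Y))"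

definition g10 :: "('a::real_vector \<Rightarrow> 'a) \<Rightarrow> ('a \<times> 'a) set" where
  "g10 J = {(x, - J x) | x. True}"

definition unitary_frame :: "('a::real_vector \<Rightarrow> 'a) \<Rightarrow> ('a \<Rightarrow> 'a \<Rightarrow> real) \<Rightarrow> nat \<Rightarrow> (nat \<Rightarrow> 'a \<times> 'a) \<Rightarrow> bool" where
  "unitary_frame J g n e \<longleftrightarrow> (\<forall>i<n. e i \<in> g10 J)
     \<and> (\<forall>i<n. \<forall>j<n. cform g (e i) (cconj (e j)) = (if i = j then 1 else 0))"

text \<open>D^j_{ik} = g([conj e_j, e_k], e_i).\<close>

definition Dcoef :: "('a::real_vector \<Rightarrow> 'a \<Rightarrow> 'a) \<Rightarrow> ('a \<Rightarrow> 'a \<Rightarrow> real) \<Rightarrow> (nat \<Rightarrow> 'a \<times> 'a)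
    \<Rightarrow> nat \<Rightarrow> nat \<Rightarrow> nat \<Rightarrow> complex" where
  "Dcoef br g e j i k = cform g (cbil br (cconj (e j)) (e k)) (e i)"

text \<open>A (left-invariant) connection on the Lie algebra is a bilinear map
  nab with nab x y = nabla_x y.  Torsion T(x,y) = nabla_x y - nabla_y x - [x,y].\<close>

definition torsion :: "('a::real_vector \<Rightarrow> 'a \<Rightarrow> 'a) \<Rightarrow> ('a \<Rightarrow> 'a \<Rightarrow> 'a) \<Rightarrow> 'a \<Rightarrow> 'a \<Rightarrow> 'a" where
  "torsion br nab x y = nab x y - nab y x - br x y"

definition chern_connection ::
  "('a::real_vector \<Rightarrow> 'a \<Rightarrow> 'a) \<Rightarrow> ('a \<Rightarrow> 'a) \<Rightarrow> ('a \<Rightarrow> 'a \<Rightarrow> real) \<Rightarrow> ('a \<Rightarrow> 'a \<Rightarrow> 'a) \<Rightarrow> bool" where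
  "chern_connection br J g nab \<longleftrightarrow> bilinear nab
     \<and> (\<forall>x y. nab x (J y) = J (nab x y))
     \<and> (\<forall>x y z. g (nab x y) z + g y (nab x z) = 0)
     \<and> (\<forall>Z\<in>g10 J. \<forall>W\<in>g10 J. cbil (torsion br nab) Z (cconj W) = (0, 0))"

definition ccurv :: "('a::real_vector \<Rightarrow> 'a \<Rightarrow> 'a) \<Rightarrow> ('a \<Rightarrow> 'a \<Rightarrow> 'a)
    \<Rightarrow> 'a \<times> 'a \<Rightarrow> 'a \<times> 'a \<Rightarrow> 'a \<times> 'a \<Rightarrow> 'a \<times> 'a" where
  "ccurv br nab X Y Z = cbil nab X (cbil nab Y Z) - cbil nab Y (cbil nab X Z) - cbil nab (cbil br X Y) Z"

definition Rcoef :: "('a::real_vector \<Rightarrow> 'a \<Rightarrow> 'a) \<Rightarrow> ('a \<Rightarrow> 'a \<Rightarrow> real) \<Rightarrow> ('a \<Rightarrow> 'a \<Rightarrow> 'a)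
    \<Rightarrow> (nat \<Rightarrow> 'a \<times> 'a) \<Rightarrow> nat \<Rightarrow> nat \<Rightarrow> nat \<Rightarrow> nat \<Rightarrow> complex" where
  "Rcoef br g nab e i j k l = cform g (ccurv br nab (e i) (cconj (e j)) (e k)) (cconj (e l))"

definition chern_scalar :: "('a::real_vector \<Rightarrow> 'a \<Rightarrow> 'a) \<Rightarrow> ('a \<Rightarrow> 'a \<Rightarrow> real) \<Rightarrow> ('a \<Rightarrow> 'a \<Rightarrow> 'a)
    \<Rightarrow> nat \<Rightarrow> (nat \<Rightarrow> 'a \<times> 'a) \<Rightarrow> complex" where
  "chern_scalar br g nab n e = (\<Sum>i<n. \<Sum>r<n. Rcoef br g nab e i i r r)"

end

theory Submission
  imports Defs
begin

definition cs :: "complex \<Rightarrow> 'a::real_vector \<times> 'a \<Rightarrow> 'a \<times> 'a" where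
  "cs c X = (Re c *\<^sub>R fst X - Im c *\<^sub>R snd X, Re c *\<^sub>R snd X + Im c *\<^sub>R fst X)"

lemma cbil_add1: "bilinear B \<Longrightarrow> cbil B (X + Y) Z = cbil B X Z + cbil B Y Z"
  by (simp add: cbil_def bilinear_ladd algebra_simps)
lemma cbil_add2: "bilinear B \<Longrightarrow> cbil B Z (X + Y) = cbil B Z X + cbil B Z Y"
  by (simp add: cbil_def bilinear_radd algebra_simps)
lemma cbil_diff1: "bilinear B \<Longrightarrow> cbil B (X - Y) Z = cbil B X Z - cbil B Y Z"
  by (simp add: cbil_def bilinear_lsub algebra_simps)
lemma cbil_diff2: "bilinear B \<Longrightarrow> cbil B Z (X - Y) = cbil B Z X - cbil B Z Y"
  by (simp add: cbil_def bilinear_rsub algebra_simps)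
lemma cbil_cs1: "bilinear B \<Longrightarrow> cbil B (cs c X) Z = cs c (cbil B X Z)"
  by (simp add: cbil_def cs_def bilinear_lsub bilinear_ladd bilinear_lmul algebra_simps)
lemma cbil_cs2: "bilinear B \<Longrightarrow> cbil B Z (cs c X) = cs c (cbil B Z X)"
  by (simp add: cbil_def cs_def bilinear_rsub bilinear_radd bilinear_rmul algebra_simps)
lemma cbil_zero1: "bilinear B \<Longrightarrow> cbil B 0 Z = 0"
  by (simp add: cbil_def bilinear_lzero zero_prod_def)
lemma cbil_sum1: "bilinear B \<Longrightarrow> cbil B (\<Sum>i\<in>I. f i) Z = (\<Sum>i\<in>I. cbil B (f i) Z)"
  by (induction I rule: infinite_finite_induct) (auto simp: cbil_zero1 cbil_add1)
lemma cbil_zero2: "bilinear B \<Longrightarrow> cbil B Z 0 = 0"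
  by (simp add: cbil_def bilinear_rzero zero_prod_def)
lemma cbil_sum2: "bilinear B \<Longrightarrow> cbil B Z (\<Sum>i\<in>I. f i) = (\<Sum>i\<in>I. cbil B Z (f i))"
  by (induction I rule: infinite_finite_induct) (auto simp: cbil_zero2 cbil_add2)
lemma cbil_conj': "bilinear B \<Longrightarrow> cbil B (cconj X) (cconj Y) = cconj (cbil B X Y)"
  by (simp add: cbil_def cconj_def bilinear_lneg bilinear_rneg)

lemma cform_add1: "bilinear g \<Longrightarrow> cform g (X + Y) Z = cform g X Z + cform g Y Z"
  by (simp add: cform_def bilinear_ladd complex_eq_iff)
lemma cform_add2: "bilinear g \<Longrightarrow> cform g Z (X + Y) = cform g Z X + cform g Z Y"
  by (simp add: cform_def bilinear_radd complex_eq_iff)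
lemma cform_diff1: "bilinear g \<Longrightarrow> cform g (X - Y) Z = cform g X Z - cform g Y Z"
  by (simp add: cform_def bilinear_lsub complex_eq_iff)
lemma cform_diff2: "bilinear g \<Longrightarrow> cform g Z (X - Y) = cform g Z X - cform g Z Y"
  by (simp add: cform_def bilinear_rsub complex_eq_iff)
lemma cform_cs1: "bilinear g \<Longrightarrow> cform g (cs c X) Z = c * cform g X Z"
  by (simp add: cform_def cs_def bilinear_lsub bilinear_ladd bilinear_lmul complex_eq_iff algebra_simps)
lemma cform_cs2: "bilinear g \<Longrightarrow> cform g Z (cs c X) = c * cform g Z X"
  by (simp add: cform_def cs_def bilinear_rsub bilinear_radd bilinear_rmul complex_eq_iff algebra_simps)
lemma cform_zero1: "bilinear g \<Longrightarrow> cform g 0 Z = 0"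
  by (simp add: cform_def bilinear_lzero complex_eq_iff)
lemma cform_zero2: "bilinear g \<Longrightarrow> cform g Z 0 = 0"
  by (simp add: cform_def bilinear_rzero complex_eq_iff)
lemma cform_sum1: "bilinear g \<Longrightarrow> cform g (\<Sum>i\<in>I. f i) Z = (\<Sum>i\<in>I. cform g (f i) Z)"
  by (induction I rule: infinite_finite_induct) (auto simp: cform_zero1 cform_add1)
lemma cform_sum2: "bilinear g \<Longrightarrow> cform g Z (\<Sum>i\<in>I. f i) = (\<Sum>i\<in>I. cform g Z (f i))"
  by (induction I rule: infinite_finite_induct) (auto simp: cform_zero2 cform_add2)
lemma cform_conj: "bilinear g \<Longrightarrow> cform g (cconj X) (cconj Y) = cnj (cform g X Y)"
  by (simp add: cform_def cconj_def bilinear_lneg bilinear_rneg complex_eq_iff)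
lemma cform_sym: "(\<forall>x y. g x y = g y x) \<Longrightarrow> cform g X Y = cform g Y X"
  by (simp add: cform_def complex_eq_iff)
lemma cconj_cconj[simp]: "cconj (cconj X) = X"
  by (simp add: cconj_def)
lemma cs_add: "cs c (X + Y) = cs c X + cs c Y"
  by (simp add: cs_def algebra_simps)


lemma bil_sum_left: "bilinear g \<Longrightarrow> g (\<Sum>i\<in>I. f i) y = (\<Sum>i\<in>I. g (f i) y)"
  by (induction I rule: infinite_finite_induct) (auto simp: bilinear_lzero bilinear_ladd)
lemma bil_sum_right: "bilinear g \<Longrightarrow> g y (\<Sum>i\<in>I. f i) = (\<Sum>i\<in>I. g y (f i))"
  by (induction I rule: infinite_finite_induct) (auto simp: bilinear_rzero bilinear_radd)

lemma real_expand:
  fixes g :: "'a::euclidean_space \<Rightarrow> 'a \<Rightarrow> real" and w :: "'i \<Rightarrow> 'a"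
  assumes bil: "bilinear g" and pos: "\<forall>x. x \<noteq> 0 \<longrightarrow> g x x > 0"
    and fin: "finite I" and card: "card I = DIM('a)" and c: "c > 0"
    and orth: "\<And>i j. i \<in> I \<Longrightarrow> j \<in> I \<Longrightarrow> g (w i) (w j) = (if i = j then c else 0)"
  shows "v = (\<Sum>i\<in>I. (g v (w i) / c) *\<^sub>R w i)"
proof -
  have inj: "inj_on w I"
  proof (rule inj_onI)
    fix i j assume "i \<in> I" "j \<in> I" "w i = w j"
    then have "g (w i) (w i) = g (w i) (w j)" by simp
    then show "i = j" using orth[OF \<open>i\<in>I\<close> \<open>i\<in>I\<close>] orth[OF \<open>i\<in>I\<close> \<open>j\<in>I\<close>] c
      by (auto split: if_splits)
  qed
  let ?A = "w ` I"
  have ind: "independent ?A"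
  proof (rule independent_if_scalars_zero)
    show "finite ?A" using fin by simp
    fix f x assume s: "(\<Sum>x\<in>?A. f x *\<^sub>R x) = 0" and x: "x \<in> ?A"
    then obtain j where j: "j \<in> I" "x = w j" by auto
    have "(\<Sum>i\<in>I. f (w i) *\<^sub>R w i) = 0" using s by (simp add: sum.reindex[OF inj])
    then have "g (\<Sum>i\<in>I. f (w i) *\<^sub>R w i) (w j) = 0" by (simp add: bilinear_lzero[OF bil])
    then have "(\<Sum>i\<in>I. f (w i) * g (w i) (w j)) = 0"
      by (simp add: bil_sum_left[OF bil] bilinear_lmul[OF bil])
    moreover have "(\<Sum>i\<in>I. f (w i) * g (w i) (w j)) = f (w j) * c"
      using j fin by (simp add: orth if_distrib cong: if_cong)
    ultimately show "f x = 0" using c j by simp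
  qed
  have "card ?A = DIM('a)" using card by (simp add: card_image[OF inj])
  then have "dim ?A = DIM('a)" using dim_span_eq_card_independent[OF ind] by (simp add: dim_span)
  then have spanU: "span ?A = UNIV" using dim_eq_full by auto
  define P where "P = v - (\<Sum>i\<in>I. (g v (w i) / c) *\<^sub>R w i)"
  have Pw: "g P (w j) = 0" if "j \<in> I" for j
  proof -
    have "g P (w j) = g v (w j) - (\<Sum>i\<in>I. (g v (w i) / c) * g (w i) (w j))"
      by (simp add: P_def bilinear_lsub[OF bil] bil_sum_left[OF bil] bilinear_lmul[OF bil])
    also have "(\<Sum>i\<in>I. (g v (w i) / c) * g (w i) (w j)) = g v (w j)"
      using that fin c by (simp add: orth if_distrib cong: if_cong)
    finally show ?thesis by simp
  qed
  have "\<forall>y\<in>span ?A. g P y = 0"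
  proof
    fix y assume "y \<in> span ?A"
    then show "g P y = 0"
    proof (induction rule: span_induct_alt)
      case base then show ?case by (simp add: bilinear_rzero[OF bil])
    next
      case (step c x y) then show ?case
        using Pw by (auto simp: bilinear_radd[OF bil] bilinear_rmul[OF bil])
    qed
  qed
  then have "g P P = 0" using spanU by auto
  then have "P = 0" using pos by force
  then show ?thesis by (simp add: P_def)
qed


lemma fst_sum': "fst (\<Sum>i\<in>I. f i) = (\<Sum>i\<in>I. fst (f i))"
  by (induction I rule: infinite_finite_induct) auto
lemma snd_sum': "snd (\<Sum>i\<in>I. f i) = (\<Sum>i\<in>I. snd (f i))"
  by (induction I rule: infinite_finite_induct) auto

lemma h1: fixes u v :: "'a::real_vector"
  shows "(a - b) *\<^sub>R u + (c + d) *\<^sub>R v + ((a + b) *\<^sub>R u - (d - c) *\<^sub>R v) = (2*a) *\<^sub>R u + (2*c) *\<^sub>R v"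
  unfolding scaleR_diff_left scaleR_add_left mult_2 by (simp add: algebra_simps)
lemma h2: fixes u v :: "'a::real_vector"
  shows "(c + d) *\<^sub>R u - (a - b) *\<^sub>R v + ((a + b) *\<^sub>R v + (d - c) *\<^sub>R u) = (2*d) *\<^sub>R u + (2*b) *\<^sub>R v"
  unfolding scaleR_diff_left scaleR_add_left mult_2 by (simp add: algebra_simps)

locale HS =
  fixes br :: "'a::euclidean_space \<Rightarrow> 'a \<Rightarrow> 'a"
    and J :: "'a \<Rightarrow> 'a" and g :: "'a \<Rightarrow> 'a \<Rightarrow> real"
    and nab :: "'a \<Rightarrow> 'a \<Rightarrow> 'a" and n :: nat and e :: "nat \<Rightarrow> 'a \<times> 'a"
  assumes dim: "DIM('a) = 2 * n"
    and herm: "hermitian_lie_algebra br J g"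
    and unimod: "unimodular br"
    and frame: "unitary_frame J g n e"
    and chern: "chern_connection br J g nab"
begin

lemma bbr: "bilinear br" using herm by (simp add: hermitian_lie_algebra_def lie_algebra_def)
lemma bg: "bilinear g" using herm by (simp add: hermitian_lie_algebra_def herm_metric_def)
lemma bnab: "bilinear nab" using chern by (simp add: chern_connection_def)
lemma gsym: "g x y = g y x" using herm by (simp add: hermitian_lie_algebra_def herm_metric_def)
lemma gsym': "\<forall>x y. g x y = g y x" using gsym by blast
lemma gpos: "\<forall>x. x \<noteq> 0 \<longrightarrow> g x x > 0" using herm by (simp add: hermitian_lie_algebra_def herm_metric_def)
lemma gJ: "g (J x) (J y) = g x y" using herm by (simp add: hermitian_lie_algebra_def herm_metric_def)
lemma JJ: "J (J x) = - x" using herm by (simp add: hermitian_lie_algebra_def integrable_acs_def)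
lemma linJ: "linear J" using herm by (simp add: hermitian_lie_algebra_def integrable_acs_def)
lemma gJ2: "g (J x) y = - g x (J y)"
proof -
  have "g (J x) y = g (J (J x)) (J y)" by (simp add: gJ)
  also have "\<dots> = - g x (J y)" by (simp add: JJ bilinear_lneg[OF bg])
  finally show ?thesis .
qed

definition x :: "nat \<Rightarrow> 'a" where "x k = fst (e k)"
abbreviation E where "E k \<equiv> e k"
abbreviation Eb where "Eb k \<equiv> cconj (e k)"

lemma e_eq: "k < n \<Longrightarrow> e k = (x k, - J (x k))"
  using frame by (auto simp: unitary_frame_def g10_def x_def)

lemma uf: "i < n \<Longrightarrow> j < n \<Longrightarrow> cform g (e i) (cconj (e j)) = (if i = j then 1 else 0)"
  using frame by (simp add: unitary_frame_def)

lemma uf2: assumes "i < n" "j < n"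
  shows "cform g (e i) (cconj (e j)) = Complex (2 * g (x i) (x j)) (2 * g (x i) (J (x j)))"
  using assms by (simp add: e_eq cform_def cconj_def bilinear_lneg[OF bg] bilinear_rneg[OF bg] gJ gJ2 JJ)

lemma gxx: "i < n \<Longrightarrow> j < n \<Longrightarrow> g (x i) (x j) = (if i = j then 1/2 else 0)"
  using uf[of i j] uf2[of i j] by (auto simp: complex_eq_iff split: if_splits)
lemma gxJx: "i < n \<Longrightarrow> j < n \<Longrightarrow> g (x i) (J (x j)) = 0"
  using uf[of i j] uf2[of i j] by (auto simp: complex_eq_iff split: if_splits)

lemma rexp: "v = (\<Sum>k<n. (2 * g v (x k)) *\<^sub>R x k + (2 * g v (J (x k))) *\<^sub>R J (x k))"
proof -
  define w where "w = (\<lambda>(k::nat, b::bool). if b then J (x k) else x k)"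
  have "v = (\<Sum>i\<in>{..<n} \<times> UNIV. (g v (w i) / (1/2)) *\<^sub>R w i)"
  proof (rule real_expand[OF bg gpos])
    show "finite ({..<n} \<times> (UNIV::bool set))" by simp
    show "card ({..<n} \<times> (UNIV::bool set)) = DIM('a)" using dim by (simp add: card_cartesian_product)
    show "(0::real) < 1/2" by simp
    fix i j assume "i \<in> {..<n} \<times> (UNIV::bool set)" "j \<in> {..<n} \<times> (UNIV::bool set)"
    then show "g (w i) (w j) = (if i = j then 1/2 else 0)"
      by (cases i; cases j) (auto simp: w_def gxx gxJx gJ gJ2 JJ bilinear_rneg[OF bg])
  qed
  also have "\<dots> = (\<Sum>k<n. \<Sum>b\<in>UNIV. (g v (w (k,b)) / (1/2)) *\<^sub>R w (k,b))"
    by (simp add: sum.cartesian_product)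
  also have "\<dots> = (\<Sum>k<n. (2 * g v (x k)) *\<^sub>R x k + (2 * g v (J (x k))) *\<^sub>R J (x k))"
    by (simp add: UNIV_bool w_def algebra_simps)
  finally show ?thesis .
qed

lemma cexp_k: assumes "k < n"
  shows "cs (cform g (p,q) (Eb k)) (E k) + cs (cform g (p,q) (E k)) (Eb k)
    = ((2 * g p (x k)) *\<^sub>R x k + (2 * g p (J (x k))) *\<^sub>R J (x k),
                 (2 * g q (x k)) *\<^sub>R x k + (2 * g q (J (x k))) *\<^sub>R J (x k))"
  using assms
    apply (simp add: e_eq cs_def cform_def cconj_def bilinear_rneg[OF bg] prod_eq_iff h1 h2)
  done

lemma cexp: "X = (\<Sum>k<n. cs (cform g X (Eb k)) (E k) + cs (cform g X (E k)) (Eb k))"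
proof -
  obtain p q where X: "X = (p, q)" by (cases X)
  have "(\<Sum>k<n. cs (cform g X (Eb k)) (E k) + cs (cform g X (E k)) (Eb k))
      = (\<Sum>k<n. ((2 * g p (x k)) *\<^sub>R x k + (2 * g p (J (x k))) *\<^sub>R J (x k),
                 (2 * g q (x k)) *\<^sub>R x k + (2 * g q (J (x k))) *\<^sub>R J (x k)))"
    by (rule sum.cong) (simp_all add: X cexp_k)
  also have "\<dots> = (p, q)"
    by (simp add: prod_eq_iff fst_sum' snd_sum' rexp[of p, symmetric] rexp[of q, symmetric])
  finally show ?thesis by (simp add: X)
qed

end

lemma cs_zero[simp]: "cs 0 X = 0"
  by (simp add: cs_def zero_prod_def)

context HS begin

abbreviation CB where "CB \<equiv> cbil br"
abbreviation CF where "CF \<equiv> cform g"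
abbreviation CN where "CN \<equiv> cbil nab"

definition in10 :: "'a \<times> 'a \<Rightarrow> bool" where "in10 Z \<longleftrightarrow> snd Z = - J (fst Z)"
definition in01 :: "'a \<times> 'a \<Rightarrow> bool" where "in01 Z \<longleftrightarrow> snd Z = J (fst Z)"

lemma g10_in10: "Z \<in> g10 J \<longleftrightarrow> in10 Z"
  by (cases Z) (auto simp: g10_def in10_def)

lemma E10: "k < n \<Longrightarrow> in10 (E k)" by (simp add: e_eq in10_def)
lemma Eb01: "k < n \<Longrightarrow> in01 (Eb k)" by (simp add: e_eq in01_def cconj_def)
lemma conj10: "in10 Z \<Longrightarrow> in01 (cconj Z)" by (simp add: in10_def in01_def cconj_def)
lemma conj01: "in01 Z \<Longrightarrow> in10 (cconj Z)" by (simp add: in10_def in01_def cconj_def)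

lemma Jlin_add: "J (a + b) = J a + J b" using linJ by (simp add: linear_add)
lemma Jlin_diff: "J (a - b) = J a - J b" using linJ by (simp add: linear_diff)
lemma Jlin_neg: "J (- a) = - J a" using linJ by (simp add: linear_neg)

lemma iso10: assumes "in10 Z" "in10 W" shows "CF Z W = 0"
proof -
  obtain a b where "Z = (a, - J a)" "W = (b, - J b)" using assms by (cases Z, cases W) (auto simp: in10_def)
  then show ?thesis
    by (simp add: cform_def complex_eq_iff bilinear_lneg[OF bg] bilinear_rneg[OF bg] gJ gJ2 JJ)
qed

lemma iso01: assumes "in01 Z" "in01 W" shows "CF Z W = 0"
proof -
  have "CF Z W = cnj (CF (cconj Z) (cconj W))" by (simp add: cform_conj[OF bg])
  also have "CF (cconj Z) (cconj W) = 0" using assms by (simp add: iso10 conj01)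
  finally show ?thesis by simp
qed

lemma nabJ: "nab a (J b) = J (nab a b)" using chern by (simp add: chern_connection_def)

lemma N10: assumes "in10 Z" shows "in10 (CN X Z)"
  using assms by (cases X, cases Z) (auto simp: in10_def cbil_def bilinear_rneg[OF bnab] nabJ JJ Jlin_add Jlin_diff Jlin_neg)

lemma N01: assumes "in01 Z" shows "in01 (CN X Z)"
  using assms by (cases X, cases Z) (auto simp: in01_def cbil_def nabJ JJ Jlin_add Jlin_diff Jlin_neg)

lemma nij: "br (J a) (J b) - J (br (J a) b) - J (br a (J b)) - br a b = 0"
  using herm by (simp add: hermitian_lie_algebra_def integrable_acs_def)

lemma B10: assumes "in10 Z" "in10 W" shows "in10 (CB Z W)"
proof -
  obtain a b where Z: "Z = (a, - J a)" and W: "W = (b, - J b)" using assms by (cases Z, cases W) (auto simp: in10_def)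
  have "J (br (J a) (J b) - br a b) = J (J (br (J a) b + br a (J b)))"
    using nij[of a b] by (simp add: algebra_simps Jlin_add)
  then have "J (br (J a) (J b)) - J (br a b) = - (br (J a) b + br a (J b))"
    by (simp add: JJ Jlin_diff)
  then have "J (br a b) - J (br (J a) (J b)) = br (J a) b + br a (J b)"
    by (metis minus_diff_eq minus_minus)
  then have "J (br a b - br (J a) (J b)) = br (J a) b + br a (J b)"
    by (simp add: Jlin_diff)
  then show ?thesis
    by (simp add: Z W in10_def cbil_def bilinear_lneg[OF bbr] bilinear_rneg[OF bbr] algebra_simps)
qed

lemma exp10: assumes "in10 Z" shows "Z = (\<Sum>k<n. cs (CF Z (Eb k)) (E k))"
proof -
  have "Z = (\<Sum>k<n. cs (CF Z (Eb k)) (E k) + cs (CF Z (E k)) (Eb k))" by (rule cexp)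
  also have "\<dots> = (\<Sum>k<n. cs (CF Z (Eb k)) (E k))"
    by (rule sum.cong) (auto simp: iso10[OF assms E10])
  finally show ?thesis .
qed

end

lemma sum_lin: "(\<Sum>j\<in>I. a j + (c::complex) * b j) = (\<Sum>j\<in>I. a j) + c * (\<Sum>j\<in>I. b j)"
  by (simp add: sum.distrib sum_distrib_left)

context HS begin

definition jac where "jac a b c = br a (br b c) + br b (br c a) + br c (br a b)"
lemma jac0: "jac a b c = 0"
  using herm unfolding hermitian_lie_algebra_def lie_algebra_def jac_def by blast

lemma cjac: "CB X (CB Y Z) + CB Y (CB Z X) + CB Z (CB X Y) = 0"
proof -
  obtain x1 x2 y1 y2 z1 z2 where X: "X = (x1,x2)" and Y: "Y = (y1,y2)" and Z: "Z = (z1,z2)"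
    by (cases X, cases Y, cases Z) auto
  have f: "fst (CB X (CB Y Z) + CB Y (CB Z X) + CB Z (CB X Y))
     = jac x1 y1 z1 - jac x1 y2 z2 - jac x2 y1 z2 - jac x2 y2 z1"
    by (simp add: X Y Z cbil_def jac_def bilinear_radd[OF bbr] bilinear_rsub[OF bbr] algebra_simps)
  have s: "snd (CB X (CB Y Z) + CB Y (CB Z X) + CB Z (CB X Y))
     = jac x1 y1 z2 + jac x1 y2 z1 + jac x2 y1 z1 - jac x2 y2 z2"
    by (simp add: X Y Z cbil_def jac_def bilinear_radd[OF bbr] bilinear_rsub[OF bbr] algebra_simps)
  show ?thesis using f s by (simp add: jac0 prod_eq_iff)
qed

lemma met: "g (nab a b) c = - g b (nab a c)"
  using chern by (simp add: chern_connection_def eq_neg_iff_add_eq_0)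

definition mm where "mm a b c = g (nab a b) c + g b (nab a c)"
lemma mm0: "mm a b c = 0" by (simp add: mm_def met)

lemma cmet: "CF (CN X Y) Z = - CF Y (CN X Z)"
proof -
  obtain x1 x2 y1 y2 z1 z2 where X: "X = (x1,x2)" and Y: "Y = (y1,y2)" and Z: "Z = (z1,z2)"
    by (cases X, cases Y, cases Z) auto
  have r: "Re (CF (CN X Y) Z + CF Y (CN X Z)) = mm x1 y1 z1 - mm x2 y2 z1 - mm x1 y2 z2 - mm x2 y1 z2"
    by (simp add: X Y Z cform_def cbil_def mm_def bilinear_ladd[OF bg] bilinear_lsub[OF bg]
        bilinear_radd[OF bg] bilinear_rsub[OF bg] algebra_simps)
  have i: "Im (CF (CN X Y) Z + CF Y (CN X Z)) = mm x1 y1 z2 + mm x2 y1 z1 + mm x1 y2 z1 - mm x2 y2 z2"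
    by (simp add: X Y Z cform_def cbil_def mm_def bilinear_ladd[OF bg] bilinear_lsub[OF bg]
        bilinear_radd[OF bg] bilinear_rsub[OF bg] algebra_simps)
  have "CF (CN X Y) Z + CF Y (CN X Z) = 0" using r i by (simp add: mm0 complex_eq_iff)
  then show ?thesis by (simp add: eq_neg_iff_add_eq_0)
qed

lemma cbil_tor: "cbil (torsion br nab) X Y = CN X Y - CN Y X - CB X Y"
  by (simp add: cbil_def torsion_def prod_eq_iff algebra_simps)

lemma ctor: assumes "in10 Z" "in10 W"
  shows "CN Z (cconj W) = CN (cconj W) Z + CB Z (cconj W)"
proof -
  have "cbil (torsion br nab) Z (cconj W) = (0,0)"
    using chern assms by (auto simp: chern_connection_def g10_in10)
  then show ?thesis by (simp add: cbil_tor zero_prod_def[symmetric] algebra_simps)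
qed

lemma banti: "br a b = - br b a"
  using herm unfolding hermitian_lie_algebra_def lie_algebra_def by blast

lemma canti: "CB X Y = - CB Y X"
proof -
  obtain x1 x2 y1 y2 where X: "X = (x1,x2)" and Y: "Y = (y1,y2)" by (cases X, cases Y) auto
  show ?thesis using banti[of x1 y1] banti[of x2 y2] banti[of x1 y2] banti[of x2 y1]
    by (simp add: X Y cbil_def prod_eq_iff)
qed

lemma tr_aux: assumes "linear L" shows "(\<Sum>b\<in>Basis. inner u b * g (L b) v) = g (L u) v"
proof -
  have "g (L u) v = g (L (\<Sum>b\<in>Basis. inner u b *\<^sub>R b)) v" by (simp add: euclidean_representation)
  also have "\<dots> = (\<Sum>b\<in>Basis. inner u b * g (L b) v)"
    by (simp add: linear_sum[OF assms] linear_scale[OF assms] bil_sum_left[OF bg] bilinear_lmul[OF bg])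
  finally show ?thesis by simp
qed

lemma rtrace: assumes "linear L"
  shows "(\<Sum>b\<in>Basis. inner (L b) b) = (\<Sum>k<n. 2 * g (L (x k)) (x k) + 2 * g (L (J (x k))) (J (x k)))"
proof -
  have "(\<Sum>b\<in>Basis. inner (L b) b) = (\<Sum>b\<in>Basis. \<Sum>k<n. 2 * (inner (x k) b * g (L b) (x k))
            + 2 * (inner (J (x k)) b * g (L b) (J (x k))))"
    apply (rule sum.cong, simp)
    apply (subst rexp[of "L _"])
    apply (simp add: inner_sum_left inner_add_left mult.commute mult.left_commute)
    done
  also have "\<dots> = (\<Sum>k<n. 2 * (\<Sum>b\<in>Basis. inner (x k) b * g (L b) (x k))
            + 2 * (\<Sum>b\<in>Basis. inner (J (x k)) b * g (L b) (J (x k))))"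
    by (subst sum.swap) (simp add: sum.distrib sum_distrib_left)
  also have "\<dots> = (\<Sum>k<n. 2 * g (L (x k)) (x k) + 2 * g (L (J (x k))) (J (x k)))"
    by (simp add: tr_aux[OF assms])
  finally show ?thesis .
qed

lemma linbr: "linear (br y)" using bbr by (simp add: bilinear_def)

lemma Ty: "(\<Sum>j<n. CF (CB (y,0) (E j)) (Eb j) + CF (CB (y,0) (Eb j)) (E j)) = 0"
proof -
  have "(\<Sum>j<n. CF (CB (y,0) (E j)) (Eb j) + CF (CB (y,0) (Eb j)) (E j))
     = (\<Sum>j<n. complex_of_real (2 * g (br y (x j)) (x j) + 2 * g (br y (J (x j))) (J (x j))))"
    by (rule sum.cong) (simp_all add: e_eq cbil_def cform_def cconj_def complex_eq_iff
         bilinear_lzero[OF bbr] bilinear_rneg[OF bbr] bilinear_lneg[OF bg] bilinear_rneg[OF bg])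
  also have "\<dots> = complex_of_real (\<Sum>b\<in>Basis. inner (br y b) b)"
    by (simp add: rtrace[OF linbr])
  also have "\<dots> = 0" using unimod by (simp add: unimodular_def)
  finally show ?thesis .
qed

lemma ctrace: assumes "k < n"
  shows "(\<Sum>j<n. CF (CB (E k) (E j)) (Eb j) + CF (CB (E k) (Eb j)) (E j)) = 0"
proof -
  have Ek: "E k = (x k, 0) + cs (- \<i>) (J (x k), 0)"
    using assms by (simp add: e_eq cs_def)
  have "(\<Sum>j<n. CF (CB (E k) (E j)) (Eb j) + CF (CB (E k) (Eb j)) (E j))
     = (\<Sum>j<n. CF (CB (x k, 0) (E j)) (Eb j) + CF (CB (x k, 0) (Eb j)) (E j))
       + (- \<i>) * (\<Sum>j<n. CF (CB (J (x k), 0) (E j)) (Eb j) + CF (CB (J (x k), 0) (Eb j)) (E j))"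
  proof -
    have "(\<Sum>j<n. CF (CB (E k) (E j)) (Eb j) + CF (CB (E k) (Eb j)) (E j))
      = (\<Sum>j<n. (CF (CB (x k, 0) (E j)) (Eb j) + CF (CB (x k, 0) (Eb j)) (E j))
       + (- \<i>) * (CF (CB (J (x k), 0) (E j)) (Eb j) + CF (CB (J (x k), 0) (Eb j)) (E j)))"
      by (rule sum.cong) (simp_all add: Ek cbil_add1[OF bbr] cbil_cs1[OF bbr] cform_add1[OF bg] cform_cs1[OF bg] algebra_simps)
    also have "\<dots> = (\<Sum>j<n. CF (CB (x k, 0) (E j)) (Eb j) + CF (CB (x k, 0) (Eb j)) (E j))
       + (- \<i>) * (\<Sum>j<n. CF (CB (J (x k), 0) (E j)) (Eb j) + CF (CB (J (x k), 0) (Eb j)) (E j))"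
      by (rule sum_lin)
    finally show ?thesis .
  qed
  also have "\<dots> = 0" by (simp add: Ty)
  finally show ?thesis .
qed

end

context HS begin

lemma cform_neg1: "CF (- X) Y = - CF X Y"
  using cform_diff1[OF bg, of 0 X Y] cform_zero1[OF bg, of Y] by simp

abbreviation Dc where "Dc \<equiv> Dcoef br g e"
lemma Dc_def': "Dc j i k = CF (CB (Eb j) (E k)) (E i)" by (simp add: Dcoef_def)

definition tr where "tr X = (\<Sum>r<n. CF (CN X (E r)) (Eb r))"
definition bb where "bb k = (\<Sum>r<n. Dc r r k)"
definition aa where "aa k = (\<Sum>i<n. Dc i k i)"

lemma tr_add: "tr (X + Y) = tr X + tr Y"
  by (simp add: tr_def cbil_add1[OF bnab] cform_add1[OF bg] sum.distrib)
lemma tr_cs: "tr (cs c X) = c * tr X"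
  by (simp add: tr_def cbil_cs1[OF bnab] cform_cs1[OF bg] sum_distrib_left)
lemma tr_zero: "tr 0 = 0"
  by (simp add: tr_def cbil_zero1[OF bnab] cform_zero1[OF bg])
lemma tr_sum: "tr (\<Sum>i\<in>I. f i) = (\<Sum>i\<in>I. tr (f i))"
  by (induction I rule: infinite_finite_induct) (auto simp: tr_add tr_zero)

lemma comm_aux: "(\<Sum>r<n. CF (CN X (CN Y (E r))) (Eb r))
   = (\<Sum>r<n. \<Sum>l<n. CF (CN Y (E r)) (Eb l) * CF (CN X (E l)) (Eb r))"
proof (rule sum.cong)
  fix r assume "r \<in> {..<n}"
  then have "in10 (CN Y (E r))" by (simp add: N10 E10)
  then have "CN Y (E r) = (\<Sum>l<n. cs (CF (CN Y (E r)) (Eb l)) (E l))" by (rule exp10)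
  then have "CF (CN X (CN Y (E r))) (Eb r) = CF (CN X (\<Sum>l<n. cs (CF (CN Y (E r)) (Eb l)) (E l))) (Eb r)"
    by simp
  also have "\<dots> = (\<Sum>l<n. CF (CN Y (E r)) (Eb l) * CF (CN X (E l)) (Eb r))"
    by (simp add: cbil_sum2[OF bnab] cbil_cs2[OF bnab] cform_sum1[OF bg] cform_cs1[OF bg])
  finally show "CF (CN X (CN Y (E r))) (Eb r) = (\<Sum>l<n. CF (CN Y (E r)) (Eb l) * CF (CN X (E l)) (Eb r))" .
qed simp

lemma comm: "(\<Sum>r<n. CF (CN X (CN Y (E r))) (Eb r)) = (\<Sum>r<n. CF (CN Y (CN X (E r))) (Eb r))"
  unfolding comm_aux by (subst sum.swap) (simp add: mult.commute)

lemma s1: "chern_scalar br g nab n e = - (\<Sum>i<n. tr (CB (E i) (Eb i)))"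
proof -
  have "chern_scalar br g nab n e = (\<Sum>i<n. (\<Sum>r<n. CF (CN (E i) (CN (Eb i) (E r))) (Eb r))
      - (\<Sum>r<n. CF (CN (Eb i) (CN (E i) (E r))) (Eb r)) - tr (CB (E i) (Eb i)))"
    by (simp add: chern_scalar_def Rcoef_def ccurv_def cform_diff1[OF bg] sum_subtractf tr_def)
  also have "\<dots> = (\<Sum>i<n. - tr (CB (E i) (Eb i)))"
    by (simp add: comm[of "E _" "Eb _"])
  finally show ?thesis by (simp add: sum_negf)
qed

lemma trE: assumes "k < n" shows "tr (E k) = bb k"
  unfolding tr_def bb_def
proof (rule sum.cong)
  fix r assume r: "r \<in> {..<n}"
  have "CF (CN (E k) (E r)) (Eb r) = - CF (E r) (CN (E k) (Eb r))" by (rule cmet)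
  also have "CN (E k) (Eb r) = CN (Eb r) (E k) + CB (E k) (Eb r)"
    using r assms by (simp add: ctor E10)
  also have "CF (E r) (CN (Eb r) (E k) + CB (E k) (Eb r)) = CF (E r) (CB (E k) (Eb r))"
    using r assms by (simp add: cform_add2[OF bg] iso10 E10 N10)
  also have "\<dots> = CF (CB (E k) (Eb r)) (E r)" by (rule cform_sym[OF gsym'])
  also have "CB (E k) (Eb r) = - CB (Eb r) (E k)" by (rule canti)
  finally show "CF (CN (E k) (E r)) (Eb r) = Dc r r k" by (simp add: cform_neg1 Dc_def')
qed simp

lemma conjB: "CB (cconj X) (cconj Y) = cconj (CB X Y)" by (rule cbil_conj'[OF bbr])

lemma trEb: assumes "k < n" shows "tr (Eb k) = - cnj (bb k)"
proof -
  have "tr (Eb k) = (\<Sum>r<n. - cnj (Dc r r k))"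
    unfolding tr_def
  proof (rule sum.cong)
    fix r assume r: "r \<in> {..<n}"
    have "CN (E r) (Eb k) = CN (Eb k) (E r) + CB (E r) (Eb k)"
      using r assms by (simp add: ctor E10)
    then have "CN (Eb k) (E r) = CN (E r) (Eb k) - CB (E r) (Eb k)" by (simp add: algebra_simps)
    then have "CF (CN (Eb k) (E r)) (Eb r) = CF (CN (E r) (Eb k)) (Eb r) - CF (CB (E r) (Eb k)) (Eb r)"
      by (simp add: cform_diff1[OF bg])
    also have "CF (CN (E r) (Eb k)) (Eb r) = 0" using r assms by (simp add: iso01 N01 Eb01)
    also have "CB (E r) (Eb k) = cconj (CB (Eb r) (E k))" using conjB[of "Eb r" "E k"] by simp
    also have "CF (cconj (CB (Eb r) (E k))) (Eb r) = cnj (Dc r r k)"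
      by (simp add: cform_conj[OF bg] Dc_def')
    finally show "CF (CN (Eb k) (E r)) (Eb r) = - cnj (Dc r r k)" by simp
  qed simp
  then show ?thesis by (simp add: bb_def sum_negf)
qed

lemma trP: assumes "i < n"
  shows "tr (CB (E i) (Eb i)) = (\<Sum>k<n. cnj (Dc i k i) * bb k + Dc i k i * cnj (bb k))"
proof -
  let ?P = "CB (E i) (Eb i)"
  have P1: "CF ?P (Eb k) = cnj (Dc i k i)" for k
  proof -
    have "?P = cconj (CB (Eb i) (E i))" using conjB[of "Eb i" "E i"] by simp
    then show ?thesis by (simp add: cform_conj[OF bg] Dc_def')
  qed
  have P2: "CF ?P (E k) = - Dc i k i" for k
    by (subst canti) (simp add: cform_neg1 Dc_def')
  have "tr ?P = tr (\<Sum>k<n. cs (CF ?P (Eb k)) (E k) + cs (CF ?P (E k)) (Eb k))"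
    by (subst cexp[of ?P]) simp
  also have "\<dots> = (\<Sum>k<n. CF ?P (Eb k) * tr (E k) + CF ?P (E k) * tr (Eb k))"
    by (simp add: tr_sum tr_add tr_cs)
  also have "\<dots> = (\<Sum>k<n. cnj (Dc i k i) * bb k + Dc i k i * cnj (bb k))"
    by (rule sum.cong) (simp_all add: P1 P2 trE trEb)
  finally show ?thesis .
qed

lemma s2: "chern_scalar br g nab n e = - (\<Sum>k<n. cnj (aa k) * bb k + aa k * cnj (bb k))"
proof -
  have "chern_scalar br g nab n e = - (\<Sum>i<n. \<Sum>k<n. cnj (Dc i k i) * bb k + Dc i k i * cnj (bb k))"
    by (simp add: s1 trP)
  also have "(\<Sum>i<n. \<Sum>k<n. cnj (Dc i k i) * bb k + Dc i k i * cnj (bb k))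
     = (\<Sum>k<n. cnj (aa k) * bb k + aa k * cnj (bb k))"
    by (subst sum.swap) (simp add: aa_def sum.distrib sum_distrib_right)
  finally show ?thesis .
qed

end

lemma triple: "(\<Sum>l\<in>A. \<Sum>j\<in>B. \<Sum>k\<in>C. (f l k :: complex) * h j k) = (\<Sum>k\<in>C. (\<Sum>l\<in>A. f l k) * (\<Sum>j\<in>B. h j k))"
proof -
  have "(\<Sum>k\<in>C. (\<Sum>l\<in>A. f l k) * (\<Sum>j\<in>B. h j k)) = (\<Sum>k\<in>C. \<Sum>l\<in>A. \<Sum>j\<in>B. f l k * h j k)"
    by (simp add: sum_product)
  also have "\<dots> = (\<Sum>l\<in>A. \<Sum>k\<in>C. \<Sum>j\<in>B. f l k * h j k)" by (rule sum.swap)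
  also have "\<dots> = (\<Sum>l\<in>A. \<Sum>j\<in>B. \<Sum>k\<in>C. f l k * h j k)"
    by (rule sum.cong[OF refl], rule sum.swap)
  finally show ?thesis by simp
qed

context HS begin

definition cc where "cc j l k = CF (CB (E l) (E k)) (Eb j)"

lemma F1: "CF (CB (E a) (Eb b)) (Eb c) = cnj (Dc a c b)"
proof -
  have "CB (E a) (Eb b) = cconj (CB (Eb a) (E b))" using conjB[of "Eb a" "E b"] by simp
  then show ?thesis by (simp add: cform_conj[OF bg] Dc_def')
qed
lemma F2: "CF (CB (E a) (Eb b)) (E c) = - Dc b c a"
  by (subst canti) (simp add: cform_neg1 Dc_def')
lemma F3: "CF (CB (Eb a) (E b)) (Eb c) = - cnj (Dc b c a)"
  by (subst canti) (simp add: cform_neg1 F1)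
lemma F4: "CF (CB (Eb a) (E b)) (E c) = Dc a c b"
  by (simp add: Dc_def')

lemma hexp: "CF (CB X P) Q = (\<Sum>k<n. CF P (Eb k) * CF (CB X (E k)) Q + CF P (E k) * CF (CB X (Eb k)) Q)"
proof -
  have "CF (CB X P) Q = CF (CB X (\<Sum>k<n. cs (CF P (Eb k)) (E k) + cs (CF P (E k)) (Eb k))) Q"
    by (subst cexp[of P]) simp
  also have "\<dots> = (\<Sum>k<n. CF P (Eb k) * CF (CB X (E k)) Q + CF P (E k) * CF (CB X (Eb k)) Q)"
    by (simp add: cbil_sum2[OF bbr] cbil_add2[OF bbr] cbil_cs2[OF bbr] cform_sum1[OF bg]
        cform_add1[OF bg] cform_cs1[OF bg])
  finally show ?thesis .
qed

lemma TA: "CF (CB (E l) (CB (E j) (Eb l))) (Eb j) = (\<Sum>k<n. cnj (Dc j k l) * cc j l k - Dc l k j * cnj (Dc l j k))"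
  by (subst hexp) (simp add: F1 F2 cc_def)

lemma TB: "CF (CB (E j) (CB (Eb l) (E l))) (Eb j) = (\<Sum>k<n. - cnj (Dc l k l) * cc j j k + Dc l k l * cnj (Dc j j k))"
  by (subst hexp) (simp add: F1 F3 F4 cc_def)

lemma TC: assumes "l < n" "j < n"
  shows "CF (CB (Eb l) (CB (E l) (E j))) (Eb j) = (\<Sum>k<n. - (cc k l j * cnj (Dc k j l)))"
proof -
  have i: "in10 (CB (E l) (E j))" using assms by (simp add: B10 E10)
  show ?thesis
    apply (subst hexp)
    apply (rule sum.cong, simp)
    apply (simp add: F3 cc_def iso10[OF i E10])
    done
qed

lemma ccsum: assumes "k < n" shows "(\<Sum>j<n. cc j j k) = - bb k"
proof -
  have "(\<Sum>j<n. cc j j k) = (\<Sum>j<n. - CF (CB (E k) (E j)) (Eb j))"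
    by (rule sum.cong, simp) (subst canti, simp add: cc_def cform_neg1)
  also have "\<dots> = - (\<Sum>j<n. CF (CB (E k) (E j)) (Eb j))" by (simp add: sum_negf)
  also have "(\<Sum>j<n. CF (CB (E k) (E j)) (Eb j)) = - (\<Sum>j<n. CF (CB (E k) (Eb j)) (E j))"
    using ctrace[OF assms] by (simp add: sum.distrib eq_neg_iff_add_eq_0)
  also have "(\<Sum>j<n. CF (CB (E k) (Eb j)) (E j)) = - bb k"
    by (simp add: F2 bb_def sum_negf)
  finally show ?thesis by simp
qed

lemma jacid: "(\<Sum>l<n. \<Sum>j<n. \<Sum>k<n. Dc l k j * cnj (Dc l j k))
   = (\<Sum>k<n. aa k * cnj (bb k) + cnj (aa k) * bb k)"
proof -
  define S1 where "S1 = (\<Sum>l<n. \<Sum>j<n. \<Sum>k<n. cnj (Dc j k l) * cc j l k)"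
  define S2 where "S2 = (\<Sum>l<n. \<Sum>j<n. \<Sum>k<n. Dc l k j * cnj (Dc l j k))"
  define S3 where "S3 = (\<Sum>l<n. \<Sum>j<n. \<Sum>k<n. cnj (Dc l k l) * cc j j k)"
  define S4 where "S4 = (\<Sum>l<n. \<Sum>j<n. \<Sum>k<n. Dc l k l * cnj (Dc j j k))"
  define S5 where "S5 = (\<Sum>l<n. \<Sum>j<n. \<Sum>k<n. cc k l j * cnj (Dc k j l))"
  have zero: "(\<Sum>l<n. \<Sum>j<n. \<Sum>k<n. (cnj (Dc j k l) * cc j l k - Dc l k j * cnj (Dc l j k))
        + (- cnj (Dc l k l) * cc j j k + Dc l k l * cnj (Dc j j k)) + (- (cc k l j * cnj (Dc k j l)))) = 0"
  proof -
    have "(\<Sum>k<n. (cnj (Dc j k l) * cc j l k - Dc l k j * cnj (Dc l j k))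
        + (- cnj (Dc l k l) * cc j j k + Dc l k l * cnj (Dc j j k)) + (- (cc k l j * cnj (Dc k j l)))) = 0"
      if "l < n" "j < n" for l j
    proof -
      have "CF (CB (E l) (CB (E j) (Eb l)) + CB (E j) (CB (Eb l) (E l)) + CB (Eb l) (CB (E l) (E j))) (Eb j) = 0"
        by (simp add: cjac cform_zero1[OF bg])
      then have "CF (CB (E l) (CB (E j) (Eb l))) (Eb j) + CF (CB (E j) (CB (Eb l) (E l))) (Eb j)
          + CF (CB (Eb l) (CB (E l) (E j))) (Eb j) = 0"
        by (simp add: cform_add1[OF bg])
      then have "(\<Sum>k<n. cnj (Dc j k l) * cc j l k - Dc l k j * cnj (Dc l j k))
        + (\<Sum>k<n. - cnj (Dc l k l) * cc j j k + Dc l k l * cnj (Dc j j k))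
        + (\<Sum>k<n. - (cc k l j * cnj (Dc k j l))) = 0"
        by (simp only: TA TB TC[OF that])
      then show ?thesis by (simp only: sum.distrib[symmetric])
    qed
    then show ?thesis by simp
  qed
  have "S1 - S2 - S3 + S4 - S5 = 0"
    using zero by (simp add: S1_def S2_def S3_def S4_def S5_def sum.distrib sum_subtractf sum_negf algebra_simps)
  moreover have "S5 = S1"
  proof -
    have "S5 = (\<Sum>l<n. \<Sum>k<n. \<Sum>j<n. cc k l j * cnj (Dc k j l))"
      unfolding S5_def by (rule sum.cong[OF refl], rule sum.swap)
    then show ?thesis by (simp add: S1_def mult.commute)
  qed
  moreover have "S3 = - (\<Sum>k<n. cnj (aa k) * bb k)"
  proof -
    have "S3 = (\<Sum>k<n. (\<Sum>l<n. cnj (Dc l k l)) * (\<Sum>j<n. cc j j k))"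
      unfolding S3_def by (rule triple)
    also have "\<dots> = (\<Sum>k<n. - (cnj (aa k) * bb k))"
      by (rule sum.cong) (simp_all add: ccsum aa_def)
    finally show ?thesis by (simp add: sum_negf)
  qed
  moreover have "S4 = (\<Sum>k<n. aa k * cnj (bb k))"
  proof -
    have "S4 = (\<Sum>k<n. (\<Sum>l<n. Dc l k l) * (\<Sum>j<n. cnj (Dc j j k)))"
      unfolding S4_def by (rule triple)
    then show ?thesis by (simp add: aa_def bb_def)
  qed
  ultimately have "S2 = (\<Sum>k<n. aa k * cnj (bb k)) + (\<Sum>k<n. cnj (aa k) * bb k)"
    by (simp add: algebra_simps)
  then show ?thesis by (simp add: S2_def sum.distrib)
qed

lemma s3: "chern_scalar br g nab n e = - (\<Sum>l<n. \<Sum>j<n. \<Sum>k<n. Dc l k j * cnj (Dc l j k))"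
  by (simp add: s2 jacid add.commute)

end

context HS begin

definition Q where "Q = (\<Sum>r<n. \<Sum>s<n. \<Sum>t<n. (cmod (Dc t r s))\<^sup>2)"

lemma Q_eq: "(\<Sum>l<n. \<Sum>j<n. \<Sum>k<n. Dc l k j * cnj (Dc l k j)) = complex_of_real Q"
proof -
  have "(\<Sum>l<n. \<Sum>j<n. \<Sum>k<n. Dc l k j * cnj (Dc l k j))
     = (\<Sum>l<n. \<Sum>j<n. \<Sum>k<n. complex_of_real ((cmod (Dc l k j))\<^sup>2))"
    by (simp only: complex_norm_square)
  also have "\<dots> = complex_of_real (\<Sum>l<n. \<Sum>j<n. \<Sum>k<n. (cmod (Dc l k j))\<^sup>2)"
    by simp
  also have "(\<Sum>l<n. \<Sum>j<n. \<Sum>k<n. (cmod (Dc l k j))\<^sup>2) = (\<Sum>l<n. \<Sum>k<n. \<Sum>j<n. (cmod (Dc l k j))\<^sup>2)"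
    by (rule sum.cong[OF refl], rule sum.swap)
  also have "\<dots> = (\<Sum>k<n. \<Sum>l<n. \<Sum>j<n. (cmod (Dc l k j))\<^sup>2)"
    by (rule sum.swap)
  also have "\<dots> = Q" unfolding Q_def
    by (rule sum.cong[OF refl], rule sum.swap)
  finally show ?thesis .
qed

lemma Q_nonneg: "Q \<ge> 0" unfolding Q_def by (intro sum_nonneg) auto

lemma Q_pos: assumes "i < n" "j < n" "k < n" "Dc j i k \<noteq> 0" shows "Q > 0"
proof -
  have "0 < (cmod (Dc j i k))\<^sup>2" using assms by simp
  also have "\<dots> \<le> (\<Sum>t<n. (cmod (Dc t i k))\<^sup>2)"
    by (rule member_le_sum) (use assms in auto)
  also have "\<dots> \<le> (\<Sum>s<n. \<Sum>t<n. (cmod (Dc t i s))\<^sup>2)"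
    by (rule member_le_sum[where f = "\<lambda>s. \<Sum>t<n. (cmod (Dc t i s))\<^sup>2"]) (use assms in \<open>auto intro!: sum_nonneg\<close>)
  also have "\<dots> \<le> Q" unfolding Q_def
    by (rule member_le_sum[where f = "\<lambda>r. \<Sum>s<n. \<Sum>t<n. (cmod (Dc t r s))\<^sup>2"]) (use assms in \<open>auto intro!: sum_nonneg\<close>)
  finally show ?thesis .
qed

lemma sym_case: assumes "\<forall>i<n. \<forall>j<n. \<forall>k<n. Dc j i k = Dc j k i"
  shows "chern_scalar br g nab n e = - complex_of_real Q"
proof -
  have "(\<Sum>l<n. \<Sum>j<n. \<Sum>k<n. Dc l k j * cnj (Dc l j k)) = (\<Sum>l<n. \<Sum>j<n. \<Sum>k<n. Dc l k j * cnj (Dc l k j))"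
    apply (intro sum.cong refl)
    subgoal for l j k using assms by (metis lessThan_iff)
    done
  then show ?thesis by (simp add: s3 Q_eq)
qed

lemma anti_case: assumes "\<forall>i<n. \<forall>j<n. \<forall>k<n. Dc j i k = - Dc j k i"
  shows "chern_scalar br g nab n e = complex_of_real Q"
proof -
  have "(\<Sum>l<n. \<Sum>j<n. \<Sum>k<n. Dc l k j * cnj (Dc l j k)) = (\<Sum>l<n. \<Sum>j<n. \<Sum>k<n. - (Dc l k j * cnj (Dc l k j)))"
    apply (intro sum.cong refl)
    subgoal for l j k using assms by (metis lessThan_iff complex_cnj_minus mult_minus_right)
    done
  then show ?thesis by (simp add: s3 Q_eq sum_negf)
qed

lemma main:
  shows
   "((\<forall>i<n. \<forall>j<n. \<forall>k<n. Dcoef br g e j i k = Dcoef br g e j k i) \<longrightarrow>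
       chern_scalar br g nab n e
         = - complex_of_real (\<Sum>r<n. \<Sum>s<n. \<Sum>t<n. (cmod (Dcoef br g e t r s))\<^sup>2)
     \<and> Im (chern_scalar br g nab n e) = 0
     \<and> Re (chern_scalar br g nab n e) \<le> 0
     \<and> ((\<exists>i<n. \<exists>j<n. \<exists>k<n. Dcoef br g e j i k \<noteq> 0) \<longrightarrow> Re (chern_scalar br g nab n e) < 0))
  \<and> ((\<forall>i<n. \<forall>j<n. \<forall>k<n. Dcoef br g e j i k = - Dcoef br g e j k i) \<longrightarrow>
       chern_scalar br g nab n e
         = complex_of_real (\<Sum>r<n. \<Sum>s<n. \<Sum>t<n. (cmod (Dcoef br g e t r s))\<^sup>2)
     \<and> Im (chern_scalar br g nab n e) = 0
     \<and> Re (chern_scalar br g nab n e) \<ge> 0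
     \<and> ((\<exists>i<n. \<exists>j<n. \<exists>k<n. Dcoef br g e j i k \<noteq> 0) \<longrightarrow> Re (chern_scalar br g nab n e) > 0))"
proof (intro conjI impI)
  assume h: "\<forall>i<n. \<forall>j<n. \<forall>k<n. Dcoef br g e j i k = Dcoef br g e j k i"
  have s: "chern_scalar br g nab n e = - complex_of_real Q" using sym_case[OF h] .
  show "chern_scalar br g nab n e = - complex_of_real (\<Sum>r<n. \<Sum>s<n. \<Sum>t<n. (cmod (Dcoef br g e t r s))\<^sup>2)"
    using s by (simp add: Q_def)
  show "Im (chern_scalar br g nab n e) = 0" using s by simp
  show "Re (chern_scalar br g nab n e) \<le> 0" using s Q_nonneg by simp
  assume "\<exists>i<n. \<exists>j<n. \<exists>k<n. Dcoef br g e j i k \<noteq> 0"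
  then show "Re (chern_scalar br g nab n e) < 0" using s Q_pos by auto
next
  assume h: "\<forall>i<n. \<forall>j<n. \<forall>k<n. Dcoef br g e j i k = - Dcoef br g e j k i"
  have s: "chern_scalar br g nab n e = complex_of_real Q" using anti_case[OF h] .
  show "chern_scalar br g nab n e = complex_of_real (\<Sum>r<n. \<Sum>s<n. \<Sum>t<n. (cmod (Dcoef br g e t r s))\<^sup>2)"
    using s by (simp add: Q_def)
  show "Im (chern_scalar br g nab n e) = 0" using s by simp
  show "Re (chern_scalar br g nab n e) \<ge> 0" using s Q_nonneg by simp
  assume "\<exists>i<n. \<exists>j<n. \<exists>k<n. Dcoef br g e j i k \<noteq> 0"
  then show "Re (chern_scalar br g nab n e) > 0" using s Q_pos by auto
qed

end

theorem lemma4: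
  fixes br :: "'a::euclidean_space \<Rightarrow> 'a \<Rightarrow> 'a"
    and J :: "'a \<Rightarrow> 'a" and g :: "'a \<Rightarrow> 'a \<Rightarrow> real"
    and nab :: "'a \<Rightarrow> 'a \<Rightarrow> 'a" and n :: nat and e :: "nat \<Rightarrow> 'a \<times> 'a"
  assumes dim: "DIM('a) = 2 * n"
    and herm: "hermitian_lie_algebra br J g"
    and unimod: "unimodular br"
    and frame: "unitary_frame J g n e"
    and chern: "chern_connection br J g nab"
  shows
   "((\<forall>i<n. \<forall>j<n. \<forall>k<n. Dcoef br g e j i k = Dcoef br g e j k i) \<longrightarrow>
       chern_scalar br g nab n e
         = - complex_of_real (\<Sum>r<n. \<Sum>s<n. \<Sum>t<n. (cmod (Dcoef br g e t r s))\<^sup>2)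
     \<and> Im (chern_scalar br g nab n e) = 0
     \<and> Re (chern_scalar br g nab n e) \<le> 0
     \<and> ((\<exists>i<n. \<exists>j<n. \<exists>k<n. Dcoef br g e j i k \<noteq> 0) \<longrightarrow> Re (chern_scalar br g nab n e) < 0))
  \<and> ((\<forall>i<n. \<forall>j<n. \<forall>k<n. Dcoef br g e j i k = - Dcoef br g e j k i) \<longrightarrow>
       chern_scalar br g nab n e
         = complex_of_real (\<Sum>r<n. \<Sum>s<n. \<Sum>t<n. (cmod (Dcoef br g e t r s))\<^sup>2)
     \<and> Im (chern_scalar br g nab n e) = 0
     \<and> Re (chern_scalar br g nab n e) \<ge> 0
     \<and> ((\<exists>i<n. \<exists>j<n. \<exists>k<n. Dcoef br g e j i k \<noteq> 0) \<longrightarrow> Re (chern_scalar br g nab n e) > 0))"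
proof -
  interpret HS br J g nab n e using assms by unfold_locales
  show ?thesis by (rule main)
qed

end
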